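(* Let $w$ be a graphon. Then: (1) The function $x\mapsto\delta_x(w)$ on $[0,1]$ is measurable. (2) $\big|\{x\in[0,1]: d_w(x)\ge\delta(w)\}\big|\ge|K_{\delta(w)}(w)|\ge\delta(w)$. (3) $\inf_{x\in[0,1]}d_w(x)\le\delta(w)\le\sup_{x\in[0,1]}d_w(x)$.
   Context: A graphon is a Lebesgue-measurable symmetric function $w:[0,1]^2\to[0,1]$. For a measurable $K\subseteq[0,1]$ and $x\in[0,1]$ let $d_w^K(x)=\int_K w(x,y)\,\mathrm{d}y$ and $d_w(x)=d_w^{[0,1]}(x)$ (the degree of $x$). For $\kappa\in[0,1]$ define recursively $K^{1}_{\kappa}(w)=\{x: d_w(x)\ge\kappa\}$ and $K^{n+1}_{\kappa}(w)=\{x\in K^{n}_{\kappa}(w): d_w^{K^{n}_{\kappa}(w)}(x)\ge\kappa\}$, and let the $\kappa$-core be $K_{\kappa}(w)=\bigcap_{n\ge1}K^{n}_{\kappa}(w)$. The shell index of $x\in[0,1]$ is $\delta_x(w)=\sup\{\kappa\in[0,1]: x\in K_\kappa(w)\}$, and the degeneracy is $\delta(w)=\sup\{\kappa\in[0,1]: |K_\kappa(w)|>0\}$, where $|\cdot|$ is Lebesgue measure. *)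

theory Defs
  imports "HOL-Analysis.Analysis"
begin

text \<open>A graphon: Lebesgue-measurable symmetric function on the unit square with values in [0,1].
  We model it as a curried real function; only its values on the unit square matter.\<close>
definition graphon :: "(real \<Rightarrow> real \<Rightarrow> real) \<Rightarrow> bool" where
  "graphon w \<longleftrightarrow>
     (\<lambda>(x,y). w x y) \<in> borel_measurable (lebesgue_on ({0..1} \<times> {0..1})) \<and>
     (\<forall>x\<in>{0..1}. \<forall>y\<in>{0..1}. w x y = w y x \<and> 0 \<le> w x y \<and> w x y \<le> 1)"

definition deg_on :: "(real \<Rightarrow> real \<Rightarrow> real) \<Rightarrow> real set \<Rightarrow> real \<Rightarrow> real" where
  "deg_on w K x = (LINT y:K|lebesgue. w x y)"

definition deg :: "(real \<Rightarrow> real \<Rightarrow> real) \<Rightarrow> real \<Rightarrow> real" where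
  "deg w x = deg_on w {0..1} x"

text \<open>core_iter w k n is K^n_k(w); index 0 is the whole interval [0,1], so that
  core_iter w k 1 = {x in [0,1]. d_w(x) >= k}.\<close>
fun core_iter :: "(real \<Rightarrow> real \<Rightarrow> real) \<Rightarrow> real \<Rightarrow> nat \<Rightarrow> real set" where
  "core_iter w k 0 = {0..1}"
| "core_iter w k (Suc n) = {x \<in> core_iter w k n. deg_on w (core_iter w k n) x \<ge> k}"

definition core :: "(real \<Rightarrow> real \<Rightarrow> real) \<Rightarrow> real \<Rightarrow> real set" where
  "core w k = (\<Inter>n\<in>{1..}. core_iter w k n)"

definition shell_index :: "(real \<Rightarrow> real \<Rightarrow> real) \<Rightarrow> real \<Rightarrow> real" where
  "shell_index w x = Sup {k \<in> {0..1}. x \<in> core w k}"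

definition degeneracy :: "(real \<Rightarrow> real \<Rightarrow> real) \<Rightarrow> real" where
  "degeneracy w = Sup {k \<in> {0..1}. measure lebesgue (core w k) > 0}"

end

theory Submission imports Defs "HOL-Real_Asymp.Real_Asymp" begin


lemma AE_meas_lebesgue:
  fixes f g :: "'a::euclidean_space \<Rightarrow> real"
  assumes g: "g \<in> borel_measurable (lebesgue :: 'a measure)" and ae: "AE x in lebesgue. f x = g x"
  shows "f \<in> borel_measurable lebesgue"
proof (rule measurableI)
  fix A :: "real set" assume A: "A \<in> sets borel"
  have Am: "g -` A \<inter> space lebesgue \<in> sets lebesgue" using g A by (rule measurable_sets)
  have ae': "AE x in lebesgue. x \<in> g -` A \<inter> space lebesgue \<longleftrightarrow> x \<in> f -` A \<inter> space lebesgue"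
    using ae by eventually_elim auto
  show "f -` A \<inter> space lebesgue \<in> sets lebesgue"
    by (rule completion.in_sets_AE[OF ae' Am]) simp
qed auto

lemma deg_meas:
  assumes gw: "graphon w" and K: "K \<in> sets lebesgue" "K \<subseteq> {0..1}"
  shows "(\<lambda>x. indicator {0..1} x * deg_on w K x) \<in> borel_measurable lebesgue"
proof -
  define S :: "(real \<times> real) set" where "S = {0..1} \<times> {0..1}"
  define W where "W p = indicator S p * w (fst p) (snd p)" for p
  have "closed S" unfolding S_def by (intro closed_Times) auto
  then have Sb: "S \<in> sets borel" by (rule borel_closed)
  then have Ssets: "S \<in> sets lebesgue" by simp
  have "(\<lambda>(x,y). w x y) \<in> borel_measurable (lebesgue_on S)"
    using gw unfolding graphon_def S_def by auto
  then have "(\<lambda>p. indicator S p *\<^sub>R (\<lambda>(x,y). w x y) p) \<in> borel_measurable lebesgue"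
    using Ssets by (subst (asm) borel_measurable_restrict_space_iff) auto
  then have Wm: "W \<in> borel_measurable lebesgue"
    unfolding W_def by (simp add: case_prod_beta')
  obtain G where G: "G \<in> borel_measurable lborel" and GW: "AE p in lborel. W p = G p"
    using completion_ex_borel_measurable_real[OF Wm] by blast
  define G2 where "G2 p = indicator S p * max 0 (min 1 (G p))" for p
  have G2m: "G2 \<in> borel_measurable lborel" unfolding G2_def using G Sb
    by (intro borel_measurable_times borel_measurable_indicator' ) (auto simp: S_def)
  have ae2: "AE p in lborel. W p = G2 p"
    using GW proof eventually_elim
    case (elim p)
    show ?case
    proof (cases "p \<in> S")
      case True
      then have "0 \<le> w (fst p) (snd p)" "w (fst p) (snd p) \<le> 1"
        using gw unfolding graphon_def S_def by (auto simp: mem_Times_iff)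
      then show ?thesis using True elim unfolding W_def G2_def by (auto simp: indicator_def)
    next
      case False
      then show ?thesis unfolding W_def G2_def by simp
    qed
  qed
  have "AE p in lborel \<Otimes>\<^sub>M lborel. W p = G2 p" unfolding lborel_prod by (rule ae2)
  then have aexy: "AE x in lborel. AE y in lborel. W (x,y) = G2 (x,y)"
    by (rule lborel_pair.AE_pair)
  have "(indicator K :: real \<Rightarrow> real) \<in> borel_measurable (lebesgue :: real measure)" using K by simp
  then obtain h :: "real \<Rightarrow> real" where h: "h \<in> borel_measurable (lborel :: real measure)" and hK: "AE y in lborel. indicator K y = h y"
    using completion_ex_borel_measurable_real by blast
  define F where "F x = (\<integral>y. h y * G2 (x,y) \<partial>lborel)" for x
  have G2m': "G2 \<in> borel_measurable (lborel \<Otimes>\<^sub>M lborel)" unfolding lborel_prod by (rule G2m)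
  have "(\<lambda>p. h (snd p) * G2 p) \<in> borel_measurable (lborel \<Otimes>\<^sub>M lborel)"
    by (intro borel_measurable_times measurable_compose[OF measurable_snd h] G2m')
  moreover have "(\<lambda>p. h (snd p) * G2 p) = (\<lambda>(x,y). h y * G2 (x,y))" by auto
  ultimately have mm: "(\<lambda>(x,y). h y * G2 (x,y)) \<in> borel_measurable (lborel \<Otimes>\<^sub>M lborel)"
    by (simp only:)
  have "F \<in> borel_measurable lborel" unfolding F_def
    by (rule lborel.borel_measurable_lebesgue_integral) (rule mm)
  then have Fm: "(\<lambda>x. indicator {0..1} x * F x) \<in> borel_measurable lebesgue" by (intro borel_measurable_times) (auto intro: measurable_completion)
  have "AE x in lborel. indicator {0..1} x * deg_on w K x = indicator {0..1} x * F x"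
    using aexy proof eventually_elim
    case (elim x)
    show ?case
    proof (cases "x \<in> {0..1}")
      case True
      have eq1: "indicator K y *\<^sub>R w x y = indicator K y * W (x,y)" for y
        using True K(2) unfolding W_def S_def by (auto simp: indicator_def)
      have ae3: "AE y in lebesgue. indicator K y * W (x,y) = h y * G2 (x,y)"
        using AE_completion[OF elim] AE_completion[OF hK] by eventually_elim simp
      have m3: "(\<lambda>y. h y * G2 (x,y)) \<in> borel_measurable lborel" using h G2m by measurable
      have "deg_on w K x = (\<integral>y. indicator K y * W (x,y) \<partial>lebesgue)"
        unfolding deg_on_def set_lebesgue_integral_def eq1 ..
      also have "\<dots> = (\<integral>y. h y * G2 (x,y) \<partial>lebesgue)"
      proof (rule integral_cong_AE)
        show m4: "(\<lambda>y. h y * G2 (x,y)) \<in> borel_measurable lebesgue"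
          using m3 by (rule measurable_completion)
        show "(\<lambda>y. indicator K y * W (x,y)) \<in> borel_measurable lebesgue"
          using m4 ae3 by (rule AE_meas_lebesgue)
      qed (rule ae3)
      also have "\<dots> = F x" unfolding F_def using m3 by (rule integral_completion)
      finally show ?thesis by simp
    qed simp
  qed
  then have "AE x in lebesgue. indicator {0..1} x * deg_on w K x = indicator {0..1} x * F x"
    by (rule AE_completion)
  then show ?thesis by (rule AE_meas_lebesgue[OF Fm])
qed


lemma lmeas01:
  assumes "K \<in> sets lebesgue" "K \<subseteq> {0..1::real}"
  shows "K \<in> lmeasurable"
  using assms by (intro bounded_set_imp_lmeasurable bounded_subset[OF bounded_closed_interval]) auto

lemma fin01:
  assumes "K \<in> sets lebesgue" "K \<subseteq> {0..1::real}"
  shows "emeasure lebesgue K \<noteq> \<infinity>"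
  by (metis fmeasurableD2 lmeas01[OF assms] infinity_ennreal_def)

lemma deg_nonneg:
  assumes gw: "graphon w" and x: "x \<in> {0..1}" and K: "K \<subseteq> {0..1}"
  shows "0 \<le> deg_on w K x"
  unfolding deg_on_def set_lebesgue_integral_def
proof (intro integral_nonneg_AE AE_I2)
  fix y show "0 \<le> indicator K y *\<^sub>R w x y"
    using gw x K unfolding graphon_def by (auto simp: indicator_def)
qed

lemma deg_le_measure:
  assumes gw: "graphon w" and x: "x \<in> {0..1}" and K: "K \<in> sets lebesgue" "K \<subseteq> {0..1}"
  shows "deg_on w K x \<le> measure lebesgue K"
proof (cases "integrable lebesgue (\<lambda>y. indicator K y *\<^sub>R w x y)")
  case True
  have fin: "emeasure lebesgue K < \<infinity>" using fin01[OF K] by (simp add: less_top)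
  have "deg_on w K x = (\<integral>y. indicator K y *\<^sub>R w x y \<partial>lebesgue)"
    unfolding deg_on_def set_lebesgue_integral_def ..
  also have "\<dots> \<le> (\<integral>y. indicator K y \<partial>lebesgue)"
  proof (rule integral_mono)
    show "integrable lebesgue (indicator K :: real \<Rightarrow> real)" using K(1) fin by simp
    fix y show "indicator K y *\<^sub>R w x y \<le> (indicator K y :: real)"
      using gw x K unfolding graphon_def by (auto simp: indicator_def)
  qed (rule True)
  also have "\<dots> = measure lebesgue K"
    by (simp add: Bochner_Integration.integral_indicator)
  finally show ?thesis .
next
  case False
  then have "deg_on w K x = 0"
    unfolding deg_on_def set_lebesgue_integral_def by (rule not_integrable_integral_eq)
  then show ?thesis by simp
qed

lemma deg_nz_integrable:
  assumes "deg_on w K x \<noteq> 0"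
  shows "set_integrable lebesgue K (w x)"
  using assms unfolding deg_on_def set_lebesgue_integral_def set_integrable_def
  using not_integrable_integral_eq by blast

lemma deg_diff:
  assumes gw: "graphon w" and x: "x \<in> {0..1}" and I: "set_integrable lebesgue {0..1} (w x)"
    and A: "A \<in> sets lebesgue" "A \<subseteq> {0..1}" and B: "B \<in> sets lebesgue" "B \<subseteq> A"
  shows "deg_on w B x \<le> deg_on w A x"
    "deg_on w A x \<le> deg_on w B x + (measure lebesgue A - measure lebesgue B)"
proof -
  have AB: "A - B \<in> sets lebesgue" using A B by auto
  have IB: "set_integrable lebesgue B (w x)" using I B A by (intro set_integrable_subset[OF I]) auto
  have IAB: "set_integrable lebesgue (A - B) (w x)" using I AB A by (intro set_integrable_subset[OF I]) auto
  have "deg_on w A x = deg_on w (B \<union> (A - B)) x" using B by (simp add: Un_absorb1 Un_Diff_cancel)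
  also have "\<dots> = deg_on w B x + deg_on w (A - B) x"
    unfolding deg_on_def by (rule set_integral_Un[OF _ IB IAB]) auto
  finally have eq: "deg_on w A x = deg_on w B x + deg_on w (A - B) x" .
  have "0 \<le> deg_on w (A - B) x" using A by (intro deg_nonneg[OF gw x]) auto
  then show "deg_on w B x \<le> deg_on w A x" using eq by simp
  have "deg_on w (A - B) x \<le> measure lebesgue (A - B)" using A AB by (intro deg_le_measure[OF gw x]) auto
  also have "\<dots> = measure lebesgue A - measure lebesgue B"
    using A B by (intro measure_Diff fin01) auto
  finally show "deg_on w A x \<le> deg_on w B x + (measure lebesgue A - measure lebesgue B)" using eq by simp
qed

lemma C_props:
  assumes gw: "graphon w"
  shows "core_iter w k n \<in> sets lebesgue \<and> core_iter w k n \<subseteq> {0..1}"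
proof (induction n)
  case 0 then show ?case by simp
next
  case (Suc n)
  define f where "f x = indicator {0..1} x * deg_on w (core_iter w k n) x" for x
  have "f \<in> borel_measurable lebesgue" unfolding f_def using Suc by (intro deg_meas[OF gw]) auto
  then have m: "f -` {k..} \<inter> space lebesgue \<in> sets lebesgue" by (rule measurable_sets) simp
  have "core_iter w k (Suc n) = core_iter w k n \<inter> (f -` {k..} \<inter> space lebesgue)"
    using Suc by (auto simp: f_def)
  then show ?case using m Suc by auto
qed

lemma C_dec: "decseq (core_iter w k)"
  by (rule decseq_SucI) auto

lemma C_sub[dest]: "x \<in> core_iter w k n \<Longrightarrow> x \<in> {0..1}"
  by (induction n) auto

lemma C_le: "m \<le> n \<Longrightarrow> core_iter w k n \<subseteq> core_iter w k m"
  using C_dec[of w k] unfolding decseq_def by blast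

lemma core_eq: "core w k = (\<Inter>n. core_iter w k n)"
proof (rule set_eqI)
  fix x
  have "(\<forall>n\<in>{1..}. x \<in> core_iter w k n) \<longleftrightarrow> (\<forall>n. x \<in> core_iter w k n)"
  proof safe
    fix n assume a: "\<forall>n\<in>{1..}. x \<in> core_iter w k n"
    have "Suc n \<in> {1..}" by simp
    then have "x \<in> core_iter w k (Suc n)" using a by blast
    then show "x \<in> core_iter w k n" using C_le[of n "Suc n" w k] by auto
  qed blast
  then show "x \<in> core w k \<longleftrightarrow> x \<in> (\<Inter>n. core_iter w k n)" unfolding core_def by simp
qed

lemma core_sub[dest]: "x \<in> core w k \<Longrightarrow> x \<in> {0..1}"
  unfolding core_eq by blast

lemma core_props:
  assumes gw: "graphon w"
  shows "core w k \<in> sets lebesgue" "core w k \<subseteq> {0..1}"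
  using C_props[OF gw] unfolding core_eq by blast+

lemma C_nonpos:
  assumes gw: "graphon w" and k: "k \<le> 0"
  shows "core_iter w k n = {0..1}"
proof (induction n)
  case (Suc n)
  then show ?case using deg_nonneg[OF gw, of _ "{0..1}"] k by (auto intro: order_trans)
qed simp

lemma core_nonpos:
  assumes gw: "graphon w" and k: "k \<le> 0"
  shows "core w k = {0..1}"
  unfolding core_eq using C_nonpos[OF gw k] by simp

lemma C_good:
  assumes k: "k > 0" and x: "x \<in> core_iter w k (Suc n)"
  shows "set_integrable lebesgue {0..1} (w x)"
proof -
  have "x \<in> core_iter w k (Suc 0)" using x C_le[of "Suc 0" "Suc n" w k] by blast
  then have "deg_on w {0..1} x \<noteq> 0" using k by auto
  then show ?thesis by (rule deg_nz_integrable)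
qed

lemma lim_deg:
  assumes gw: "graphon w" and x: "x \<in> {0..1}" and I: "set_integrable lebesgue {0..1} (w x)"
    and A: "\<And>n. A n \<in> sets lebesgue" "\<And>n. A n \<subseteq> {0..1}" "decseq A"
    and c: "\<And>n. c n \<le> deg_on w (A n) x" "c \<longlonglongrightarrow> c0"
  shows "c0 \<le> deg_on w (\<Inter>n. A n) x"
proof -
  define L where "L = (\<Inter>n. A n)"
  have L: "L \<in> sets lebesgue" "L \<subseteq> A n" for n using A unfolding L_def by auto
  have lim: "(\<lambda>n. measure lebesgue (A n)) \<longlonglongrightarrow> measure lebesgue L"
    unfolding L_def using A by (intro Lim_measure_decseq fin01) auto
  have "(\<lambda>n. deg_on w L x + (measure lebesgue (A n) - measure lebesgue L)) \<longlonglongrightarrow> deg_on w L x + (measure lebesgue L - measure lebesgue L)"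
    by (intro tendsto_intros lim)
  then have lim2: "(\<lambda>n. deg_on w L x + (measure lebesgue (A n) - measure lebesgue L)) \<longlonglongrightarrow> deg_on w L x" by simp
  have "c n \<le> deg_on w L x + (measure lebesgue (A n) - measure lebesgue L)" for n
    using c(1)[of n] deg_diff(2)[OF gw x I A(1,2) L(1) L(2)[of n]] by simp
  then have "c0 \<le> deg_on w L x" using LIMSEQ_le[OF c(2) lim2] by blast
  then show ?thesis unfolding L_def .
qed

lemma core_deg:
  assumes gw: "graphon w" and k: "k > 0" and x: "x \<in> core w k"
  shows "k \<le> deg_on w (core w k) x"
proof -
  have xs: "x \<in> core_iter w k (Suc n)" for n using x unfolding core_eq by blast
  have I: "set_integrable lebesgue {0..1} (w x)" using C_good[OF k xs[of 0]] .
  have x01: "x \<in> {0..1}" using x by blast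
  show ?thesis unfolding core_eq
    by (rule lim_deg[OF gw x01 I, of _ "\<lambda>_. k"]) (use C_props[OF gw] C_dec xs in auto)
qed

lemma core_mono:
  assumes gw: "graphon w" and le: "k1 \<le> k2"
  shows "core w k2 \<subseteq> core w k1"
proof (cases "k1 \<le> 0")
  case True
  then show ?thesis using core_nonpos[OF gw True] core_props[OF gw] by auto
next
  case False
  then have k1: "k1 > 0" and k2: "k2 > 0" using le by auto
  have "core_iter w k2 n \<subseteq> core_iter w k1 n" for n
  proof (induction n)
    case (Suc n)
    show ?case
    proof
      fix x assume x: "x \<in> core_iter w k2 (Suc n)"
      have I: "set_integrable lebesgue {0..1} (w x)" using C_good[OF k2 x] .
      have xn: "x \<in> core_iter w k2 n" using x by simp
      have x01: "x \<in> {0..1}" using xn by blast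
      have "k1 \<le> deg_on w (core_iter w k2 n) x" using x le by simp
      also have "\<dots> \<le> deg_on w (core_iter w k1 n) x"
        using C_props[OF gw] Suc by (intro deg_diff(1)[OF gw x01 I]) auto
      finally show "x \<in> core_iter w k1 (Suc n)" using xn Suc by auto
    qed
  qed simp
  then show ?thesis unfolding core_eq by blast
qed


theorem lemma3:
  fixes w :: "real \<Rightarrow> real \<Rightarrow> real"
  assumes "graphon w"
  shows "(\<lambda>x. shell_index w x) \<in> borel_measurable (lebesgue_on {0..1})
    \<and> measure lebesgue {x \<in> {0..1}. deg w x \<ge> degeneracy w} \<ge> measure lebesgue (core w (degeneracy w))
    \<and> measure lebesgue (core w (degeneracy w)) \<ge> degeneracy w
    \<and> (INF x\<in>{0..1}. deg w x) \<le> degeneracy w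
    \<and> degeneracy w \<le> (SUP x\<in>{0..1}. deg w x)"
proof -
  note gw = assms
  define S where "S = {k \<in> {0..1}. measure lebesgue (core w k) > 0}"
  have core0: "core w 0 = {0..1}" using core_nonpos[OF gw] by simp
  have S0: "0 \<in> S" unfolding S_def using core0 by simp
  have Sne: "S \<noteq> {}" using S0 by blast
  have Sbdd: "bdd_above S" unfolding S_def bdd_above_def by auto
  define D where "D = degeneracy w"
  have dS: "D = Sup S" unfolding D_def degeneracy_def S_def ..
  have d0: "0 \<le> D" unfolding dS by (rule cSup_upper[OF S0 Sbdd])
  have d1: "D \<le> 1" unfolding dS by (rule cSup_least[OF Sne]) (auto simp: S_def)
  have deg01: "0 \<le> deg w x \<and> deg w x \<le> 1" if "x \<in> {0..1}" for x
    using deg_nonneg[OF gw that, of "{0..1}"] deg_le_measure[OF gw that, of "{0..1}"]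
    unfolding deg_def by simp
  have bddA: "bdd_above (deg w ` {0..1})" by (rule bdd_aboveI[of _ 1]) (use deg01 in auto)
  have bddB: "bdd_below (deg w ` {0..1})" by (rule bdd_belowI[of _ 0]) (use deg01 in auto)

  have P1: "(\<lambda>x. shell_index w x) \<in> borel_measurable (lebesgue_on {0..1})"
    unfolding borel_measurable_iff_greater
  proof
    fix a :: real
    have sp: "space (lebesgue_on {0..1}) = {0..1::real}" by (simp add: space_restrict_space)
    have c01: "{0..1::real} \<inter> space lebesgue \<in> sets lebesgue" by simp
    have Sx: "0 \<in> {k \<in> {0..1}. x \<in> core w k}" "bdd_above {k \<in> {0..1}. x \<in> core w k}"
      if "x \<in> {0..1}" for x
      using that core0 unfolding bdd_above_def by auto
    have Sxne: "{k \<in> {0..1}. x \<in> core w k} \<noteq> {}" if "x \<in> {0..1}" for x using Sx[OF that] by blast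
    define T where "T = {x \<in> {0..1}. a < shell_index w x}"
    have "T \<in> sets lebesgue"
    proof (cases "a < 0")
      case True
      have "T = {0..1}"
      proof safe
        fix x :: real assume x: "x \<in> {0..1}"
        have "0 \<le> shell_index w x" unfolding shell_index_def by (rule cSup_upper[OF Sx[OF x]])
        then show "x \<in> T" unfolding T_def using x True by simp
      qed (auto simp: T_def)
      then show ?thesis by simp
    next
      case False
      have "T = (\<Union>q\<in>\<rat> \<inter> {a<..1}. core w q)"
      proof safe
        fix x assume "x \<in> T"
        then have x: "x \<in> {0..1}" and "a < Sup {k \<in> {0..1}. x \<in> core w k}"
          unfolding T_def shell_index_def by auto
        then obtain k where k: "k \<in> {0..1}" "x \<in> core w k" "a < k"
          using less_cSup_iff[OF Sxne[OF x] Sx(2)[OF x]] by auto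
        then obtain q where q: "q \<in> \<rat>" "a < q" "q < k" using Rats_dense_in_real by blast
        have "x \<in> core w q" using core_mono[OF gw, of q k] q k by auto
        then show "x \<in> (\<Union>q\<in>\<rat> \<inter> {a<..1}. core w q)" using q k by auto
      next
        fix x q assume q: "q \<in> \<rat>" "q \<in> {a<..1}" and x: "x \<in> core w q"
        then have x01: "x \<in> {0..1}" by blast
        have "q \<in> {k \<in> {0..1}. x \<in> core w k}" using q x False by auto
        then have "q \<le> shell_index w x" unfolding shell_index_def by (rule cSup_upper) (rule Sx(2)[OF x01])
        then show "x \<in> T" unfolding T_def using q x01 by auto
      qed
      also have "\<dots> \<in> sets lebesgue"
        by (intro sets.countable_UN'' core_props(1)[OF gw]) (auto intro: countable_rat)
      finally show ?thesis .
    qed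
    moreover have "T \<subseteq> {0..1}" unfolding T_def by auto
    ultimately show "{x \<in> space (lebesgue_on {0..1}). a < shell_index w x} \<in> sets (lebesgue_on {0..1})"
      unfolding sp T_def[symmetric] using sets_restrict_space_iff[OF c01] by blast
  qed

  define T where "T = {x \<in> {0..1}. deg w x \<ge> D}"
  define f where "f x = indicator {0..1} x * deg_on w {0..1} x" for x
  have "f \<in> borel_measurable lebesgue" unfolding f_def by (intro deg_meas[OF gw]) auto
  then have fm: "f -` {D..} \<inter> space lebesgue \<in> sets lebesgue" by (rule measurable_sets) simp
  have Teq: "T = {0..1} \<inter> (f -` {D..} \<inter> space lebesgue)" unfolding T_def f_def deg_def by auto
  have c01': "{0..1::real} \<in> sets lebesgue" by simp
  have Tm: "T \<in> sets lebesgue" unfolding Teq by (rule sets.Int[OF c01' fm])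
  have Tsub: "T \<subseteq> {0..1}" unfolding T_def by auto
  have coreT: "core w D \<subseteq> T"
  proof
    fix x assume "x \<in> core w D"
    then have "x \<in> core_iter w D (Suc 0)" unfolding core_eq by blast
    then show "x \<in> T" unfolding T_def deg_def by simp
  qed
  have P2a: "measure lebesgue (core w D) \<le> measure lebesgue T"
    by (rule measure_mono_fmeasurable[OF coreT core_props(1)[OF gw] lmeas01[OF Tm Tsub]])

  have P2b: "D \<le> measure lebesgue (core w D)"
  proof (cases "D = 0")
    case True then show ?thesis by simp
  next
    case False
    then have Dp: "D > 0" using d0 by simp
    define \<kappa> where "\<kappa> m = D - D / (real m + 2)" for m :: nat
    define A where "A m = core w (\<kappa> m)" for m
    have kpos: "0 < \<kappa> m" for m
    proof -
      have "D / (real m + 2) < D / 1" using Dp by (intro divide_strict_left_mono) auto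
      then show ?thesis unfolding \<kappa>_def by simp
    qed
    have kless: "\<kappa> m < D" for m unfolding \<kappa>_def using Dp by simp
    have kmono: "\<kappa> m \<le> \<kappa> n" if "m \<le> n" for m n
    proof -
      have "D / (real n + 2) \<le> D / (real m + 2)" using Dp that by (intro divide_left_mono) auto
      then show ?thesis unfolding \<kappa>_def by simp
    qed
    have klim: "\<kappa> \<longlonglongrightarrow> D" unfolding \<kappa>_def by real_asymp
    have Am: "A m \<in> sets lebesgue" "A m \<subseteq> {0..1}" for m unfolding A_def using core_props[OF gw] by auto
    have Adec: "decseq A" unfolding decseq_def A_def using core_mono[OF gw] kmono by blast
    have kA: "\<kappa> m \<le> measure lebesgue (A m)" for m
    proof -
      obtain k where k: "k \<in> S" "\<kappa> m < k" using less_cSup_iff[OF Sne Sbdd] kless[of m] dS by auto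
      have "core w k \<subseteq> A m" unfolding A_def using core_mono[OF gw] k by auto
      then have "measure lebesgue (core w k) \<le> measure lebesgue (A m)"
        by (rule measure_mono_fmeasurable[OF _ core_props(1)[OF gw] lmeas01[OF Am]])
      moreover have "measure lebesgue (core w k) > 0" using k S_def by auto
      ultimately have "A m \<noteq> {}" by auto
      then obtain x where x: "x \<in> A m" by blast
      have x01: "x \<in> {0..1}" using x unfolding A_def by blast
      have "\<kappa> m \<le> deg_on w (A m) x" unfolding A_def by (rule core_deg[OF gw kpos]) (use x A_def in simp)
      also have "\<dots> \<le> measure lebesgue (A m)" by (rule deg_le_measure[OF gw x01 Am])
      finally show ?thesis .
    qed
    define L where "L = (\<Inter>m. A m)"
    have Lm: "L \<in> sets lebesgue" unfolding L_def using Am by blast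
    have Llim: "(\<lambda>m. measure lebesgue (A m)) \<longlonglongrightarrow> measure lebesgue L"
      unfolding L_def using Am Adec by (intro Lim_measure_decseq fin01) auto
    have DL: "D \<le> measure lebesgue L"
      by (rule LIMSEQ_le[OF klim Llim]) (use kA in auto)
    have "L \<subseteq> core_iter w D n" for n
    proof (induction n)
      case 0 then show ?case unfolding L_def A_def by auto
    next
      case (Suc n)
      show ?case
      proof
        fix x assume xL: "x \<in> L"
        have xA: "x \<in> A m" for m using xL unfolding L_def by blast
        have x01: "x \<in> {0..1}" using xA[of 0] unfolding A_def by blast
        have "x \<in> core_iter w (\<kappa> 0) (Suc 0)" using xA[of 0] unfolding A_def core_eq by blast
        then have I: "set_integrable lebesgue {0..1} (w x)" by (rule C_good[OF kpos])
        have "D \<le> deg_on w L x" unfolding L_def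
          by (rule lim_deg[OF gw x01 I Am Adec _ klim]) (use core_deg[OF gw kpos] xA A_def in simp)
        also have "\<dots> \<le> deg_on w (core_iter w D n) x"
          by (rule deg_diff(1)[OF gw x01 I _ _ Lm Suc]) (use C_props[OF gw] in auto)
        finally show "x \<in> core_iter w D (Suc n)" using Suc xL by auto
      qed
    qed
    then have "L \<subseteq> core w D" unfolding core_eq by blast
    then have "measure lebesgue L \<le> measure lebesgue (core w D)"
      by (rule measure_mono_fmeasurable[OF _ Lm lmeas01[OF core_props[OF gw]]])
    then show ?thesis using DL by simp
  qed

  define m where "m = (INF x\<in>{0..1}. deg w x)"
  have m0: "0 \<le> m" unfolding m_def by (rule cINF_greatest) (use deg01 in auto)
  have m1: "m \<le> 1" unfolding m_def using cINF_lower[OF bddB, of 0] deg01[of 0] by simp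
  have Cm: "core_iter w m n = {0..1}" for n
  proof (induction n)
    case (Suc n)
    then show ?case using cINF_lower[OF bddB] unfolding m_def deg_def by auto
  qed simp
  have "core w m = {0..1}" unfolding core_eq using Cm by simp
  then have "m \<in> S" unfolding S_def using m0 m1 by simp
  then have P3a: "m \<le> D" unfolding dS by (rule cSup_upper[OF _ Sbdd])
  have P3b: "D \<le> (SUP x\<in>{0..1}. deg w x)" unfolding dS
  proof (rule cSup_least[OF Sne])
    fix k assume k: "k \<in> S"
    then have "core w k \<noteq> {}" unfolding S_def by auto
    then obtain x where "x \<in> core w k" by blast
    then have "x \<in> core_iter w k (Suc 0)" unfolding core_eq by blast
    then have x: "x \<in> {0..1}" "k \<le> deg w x" unfolding deg_def by auto
    then show "k \<le> (SUP x\<in>{0..1}. deg w x)" using cSUP_upper[OF x(1) bddA] by linarith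
  qed
  show ?thesis using P1 P2a P2b P3a P3b unfolding D_def T_def m_def by simp
qed

end
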